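(* Let $n_1,n_2,d_1,d_2$ be positive integers with $1\le d_\iota\le n_\iota-1$ for $\iota=1,2$. If $\frac{d_1}{n_1}=\frac{d_2}{n_2}$ and $\binom{n_1}{d_1}=\binom{n_2}{d_2}$, then $n_1=n_2$ and $d_1=d_2$. *)

theory Defs
  imports Complex_Main
begin

end

theory Submission
  imports Defs
begin

lemma stepA: "(a+b choose a) \<le> (Suc a + b choose Suc a)"
  by (simp add: )
lemma stepA_strict: "1 \<le> (b::nat) \<Longrightarrow> (a+b choose a) < (Suc a + b choose Suc a)"
proof -
  assume "1 \<le> b"
  then have "0 < (a+b choose Suc a)" by simp
  moreover have "(Suc a + b choose Suc a) = (a+b choose a) + (a+b choose Suc a)" by simp
  ultimately show ?thesis by linarith
qed
lemma sym: "(a+b choose a) = (a+b choose (b::nat))"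
  using binomial_symmetric[of a "a+b"] by simp

lemma monoA: "a \<le> a' \<Longrightarrow> (a+b choose a) \<le> (a'+b choose a')"
  using lift_Suc_mono_le[of "\<lambda>a. (a+b choose a)"] stepA by blast
lemma monoB: "b \<le> b' \<Longrightarrow> (a+b choose a) \<le> (a+b' choose (a::nat))"
  using monoA[of b b' a] sym[of a b] sym[of a b'] by (simp add: add.commute)
lemma strictA: "1 \<le> b \<Longrightarrow> a < a' \<Longrightarrow> (a+b choose a) < (a'+b choose a')"
  using stepA_strict[of b a] monoA[of "Suc a" a' b] by (metis Suc_leI add_Suc order_less_le_trans)
lemma strictB: "1 \<le> (a::nat) \<Longrightarrow> b < b' \<Longrightarrow> (a+b choose a) < (a+b' choose a)"
  using strictA[of a b b'] sym[of a b] sym[of a b'] by (simp add: add.commute)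

lemma main_less:
  fixes n1 n2 d1 d2 :: nat
  assumes "1 \<le> d1" and "d1 \<le> n1 - 1"
      and "1 \<le> d2" and "d2 \<le> n2 - 1"
      and eq: "d1 * n2 = d2 * n1" and lt: "n1 < n2"
  shows "n1 choose d1 < n2 choose d2"
proof -
  have "d1 * n1 < d1 * n2" using assms(1) lt by (intro mult_strict_left_mono) auto
  hence "d1 * n1 < d2 * n1" using eq by simp
  hence d: "d1 < d2" using mult_less_cancel2 by blast
  have "(n1 - d1) * n2 = n1 * n2 - d1 * n2" by (simp add: diff_mult_distrib)
  also have "\<dots> = n1 * n2 - d2 * n1" using eq by simp
  also have "\<dots> = (n2 - d2) * n1" by (simp add: diff_mult_distrib2 mult.commute)
  finally have e: "(n1 - d1) * n2 = (n2 - d2) * n1" .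
  have "(n1 - d1) * n1 < (n1 - d1) * n2" using assms by simp
  hence "(n1 - d1) * n1 < (n2 - d2) * n1" using e by simp
  hence e2: "n1 - d1 < n2 - d2" using mult_less_cancel2 by blast
  have "(d1 + (n1-d1) choose d1) < (d2 + (n1-d1) choose d2)"
    using strictA[OF _ d, of "n1-d1"] assms by simp
  also have "\<dots> \<le> (d2 + (n2-d2) choose d2)" using monoB[of "n1-d1" "n2-d2" d2] e2 by simp
  finally show ?thesis using assms by simp
qed

theorem lemma2p8:
  fixes n1 n2 d1 d2 :: nat
  assumes "1 \<le> d1" and "d1 \<le> n1 - 1"
      and "1 \<le> d2" and "d2 \<le> n2 - 1"
      and "real d1 / real n1 = real d2 / real n2"
      and "n1 choose d1 = n2 choose d2"
  shows "n1 = n2 \<and> d1 = d2"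
proof -
  have p: "n1 > 0" "n2 > 0" using assms by auto
  have "real d1 * real n2 = real d2 * real n1" using assms(5) p
    by (simp add: field_simps)
  hence eq: "d1 * n2 = d2 * n1" by (metis of_nat_eq_iff of_nat_mult)
  have "n1 = n2"
  proof (rule ccontr)
    assume "n1 \<noteq> n2"
    then consider "n1 < n2" | "n2 < n1" by linarith
    thus False
    proof cases
      case 1 thus ?thesis using main_less[OF assms(1-4) eq] assms(6) by simp
    next
      case 2 thus ?thesis using main_less[OF assms(3,4,1,2) eq[symmetric]] assms(6) by simp
    qed
  qed
  moreover hence "d1 = d2" using eq p by simp
  ultimately show ?thesis by simp
qed

end
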